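(* Let $\alpha,\beta,d>0$ and $f$ as in the context. The only nonnegative, bounded stationary solutions $(v_j,\rho_j)_{j\in\mathbb{Z}}$ of the system described in the context are $(v_j,\rho_j)\equiv(0,0)$ for all $j$ and $(v_j,\rho_j)\equiv(\beta/\alpha,1)$ for all $j$ (i.e. $v_j(x)=\beta/\alpha$ for all $x\in[0,1]$ and $\rho_j=1$).
   Context: $f\in\mathscr{C}^1([0,1])$ satisfies $f(0)=f(1)=0$ and $0<f(u)\le f'(0)u$ for $u\in(0,1)$, extended to a locally Lipschitz function on $\mathbb{R}$ negative on $\mathbb{R}\setminus[0,1]$. A stationary solution is a family $(v_j,\rho_j)_{j\in\mathbb{Z}}$ with $v_j\in\mathscr{C}^2([0,1])$ and $\rho_j\in\mathbb{R}$ such that for all $j\in\mathbb{Z}$: $d\,v_j''(x)=0$ for $x\in(0,1)$; $0=f(\rho_j)+\alpha(v_j(0)+v_{j-1}(1))-2\beta\rho_j$; $-d\,v_j'(0)+\alpha v_j(0)=\beta\rho_j$; $d\,v_j'(1)+\alpha v_j(1)=\beta\rho_{j+1}$. Nonnegative and bounded means $v_j\ge0$, $\rho_j\ge0$ and $\sup_{j,x}|v_j(x)|+\sup_j|\rho_j|<\infty$. *)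

theory Defs
  imports "HOL-Analysis.Analysis"
begin

definition C1_on_unit :: "(real \<Rightarrow> real) \<Rightarrow> (real \<Rightarrow> real) \<Rightarrow> bool" where
  "C1_on_unit f f' \<longleftrightarrow>
     (\<forall>x\<in>{0..1}. (f has_real_derivative f' x) (at x within {0..1})) \<and> continuous_on {0..1} f'"

definition locally_lipschitz_real :: "(real \<Rightarrow> real) \<Rightarrow> bool" where
  "locally_lipschitz_real f \<longleftrightarrow>
     (\<forall>x. \<exists>e>0. \<exists>L. \<forall>y\<in>ball x e. \<forall>z\<in>ball x e. \<bar>f y - f z\<bar> \<le> L * \<bar>y - z\<bar>)"

definition admissible_f :: "(real \<Rightarrow> real) \<Rightarrow> bool" where
  "admissible_f f \<longleftrightarrow>
     (\<exists>f'. C1_on_unit f f' \<and> f 0 = 0 \<and> f 1 = 0 \<and>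
        (\<forall>u\<in>{0<..<1}. 0 < f u \<and> f u \<le> f' 0 * u)) \<and>
     locally_lipschitz_real f \<and> (\<forall>u. u \<notin> {0..1} \<longrightarrow> f u < 0)"

definition stationary_solution ::
  "real \<Rightarrow> real \<Rightarrow> real \<Rightarrow> (real \<Rightarrow> real) \<Rightarrow> (int \<Rightarrow> real \<Rightarrow> real) \<Rightarrow> (int \<Rightarrow> real) \<Rightarrow> bool" where
  "stationary_solution \<alpha> \<beta> d f v \<rho> \<longleftrightarrow>
     (\<exists>v1 v2. \<forall>j::int.
        (\<forall>x\<in>{0..1}. (v j has_real_derivative v1 j x) (at x within {0..1})) \<and>
        (\<forall>x\<in>{0..1}. (v1 j has_real_derivative v2 j x) (at x within {0..1})) \<and>
        continuous_on {0..1} (v2 j) \<and>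
        (\<forall>x\<in>{0<..<1}. d * v2 j x = 0) \<and>
        0 = f (\<rho> j) + \<alpha> * (v j 0 + v (j - 1) 1) - 2 * \<beta> * \<rho> j \<and>
        - d * v1 j 0 + \<alpha> * v j 0 = \<beta> * \<rho> j \<and>
        d * v1 j 1 + \<alpha> * v j 1 = \<beta> * \<rho> (j + 1))"

definition nonneg_bounded :: "(int \<Rightarrow> real \<Rightarrow> real) \<Rightarrow> (int \<Rightarrow> real) \<Rightarrow> bool" where
  "nonneg_bounded v \<rho> \<longleftrightarrow>
     (\<forall>j. \<forall>x\<in>{0..1}. v j x \<ge> 0) \<and> (\<forall>j. \<rho> j \<ge> 0) \<and>
     (\<exists>M. \<forall>j. (\<forall>x\<in>{0..1}. \<bar>v j x\<bar> \<le> M) \<and> \<bar>\<rho> j\<bar> \<le> M)"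

end

theory Submission
  imports Defs
begin

lemma affine_sol:
  fixes g g1 g2 :: "real \<Rightarrow> real"
  assumes d1: "\<forall>x\<in>{0..1}. (g has_real_derivative g1 x) (at x within {0..1})"
    and d2: "\<forall>x\<in>{0..1}. (g1 has_real_derivative g2 x) (at x within {0..1})"
    and z: "\<forall>x\<in>{0<..<1}. g2 x = 0"
  shows "\<forall>x\<in>{0..1}. g1 x = g1 0 \<and> g x = g 0 + g1 0 * x"
proof -
  have c1: "continuous_on {0..1} g1"
    using d2 by (meson DERIV_continuous continuous_at_imp_continuous_on continuous_on_eq_continuous_within)
  have g1c: "g1 x = g1 0" if x: "x \<in> {0..1}" for x
  proof (rule has_derivative_zero_unique_strong_interval[of "{0,1}" 0 1 g1 "g1 0" x])
    show "(g1 has_derivative (\<lambda>h. 0)) (at y within {0..1})" if "y \<in> {0..1} - {0,1}" for y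
    proof -
      have "g2 y = 0" using that z by auto
      moreover have "(g1 has_real_derivative g2 y) (at y within {0..1})" using d2 that by blast
      ultimately have "(g1 has_real_derivative 0) (at y within {0..1})" by simp
      then show ?thesis by (simp add: has_field_derivative_def lambda_zero)
    qed
  qed (use c1 x in auto)
  have "\<exists>c. \<forall>x\<in>{0..1}. g x - g1 0 * x = c"
  proof (rule has_field_derivative_zero_constant)
    fix x :: real assume x: "x \<in> {0..1}"
    have "((\<lambda>x. g x - g1 0 * x) has_real_derivative (g1 x - g1 0)) (at x within {0..1})"
      using d1 x by (auto intro!: derivative_eq_intros)
    then show "((\<lambda>x. g x - g1 0 * x) has_real_derivative 0) (at x within {0..1})"
      using g1c[OF x] by simp
  qed auto
  then obtain c where c: "\<forall>x\<in>{0..1}. g x - g1 0 * x = c" by blast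
  have "g 0 = c" using c[rule_format, of 0] by simp
  then have "\<forall>x\<in>{0..1}. g x = g 0 + g1 0 * x"
    using c by (simp add: algebra_simps)
  then show ?thesis using g1c by blast
qed

lemma lemA:
  fixes s :: "int \<Rightarrow> real"
  assumes bd: "\<forall>j. s j \<le> M"
    and cv: "\<forall>j. s j > 1 \<longrightarrow> s (j+1) - 2 * s j + s (j-1) > 0"
  shows "\<forall>j. s j > 1 \<longrightarrow> s (j+1) \<le> s j"
proof (intro allI impI, rule ccontr)
  fix j0 assume h1: "s j0 > 1" and "\<not> s (j0+1) \<le> s j0"
  define c where "c = s (j0+1) - s j0"
  have cpos: "c > 0" using \<open>\<not> s (j0+1) \<le> s j0\<close> c_def by simp
  have P: "s (j0 + int n) \<ge> s j0 + real n * c \<and> s (j0 + int n + 1) - s (j0 + int n) \<ge> c" for n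
  proof (induction n)
    case 0 then show ?case by (simp add: c_def)
  next
    case (Suc n)
    define j where "j = j0 + int n"
    have e1: "j0 + int (Suc n) = j + 1" by (simp add: j_def)
    have a: "s (j+1) \<ge> s j0 + real (Suc n) * c" using Suc j_def by (simp add: algebra_simps)
    have "s (j+1) > 1" using a h1 cpos
      by (smt (verit) of_nat_0_le_iff mult_nonneg_nonneg)
    then have "s (j+1+1) - 2 * s (j+1) + s (j+1-1) > 0" using cv by blast
    then have b: "s (j+1+1) - s (j+1) \<ge> c" using Suc j_def by simp
    show ?case unfolding e1 using a b by blast
  qed
  obtain n where n: "M - s j0 < real n * c" using reals_Archimedean3[OF cpos] by blast
  then show False using P[of n] bd[rule_format, of "j0 + int n"] by simp
qed

lemma lemB:
  fixes s :: "int \<Rightarrow> real"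
  assumes nn: "\<forall>j. s j \<ge> 0"
    and cv: "\<forall>j. s (j+1) - 2 * s j + s (j-1) \<le> 0"
  shows "\<forall>j. s (j+1) \<ge> s j"
proof (rule allI, rule ccontr)
  fix j0 assume "\<not> s (j0+1) \<ge> s j0"
  define c where "c = s j0 - s (j0+1)"
  have cpos: "c > 0" using \<open>\<not> s (j0+1) \<ge> s j0\<close> c_def by simp
  have P: "s (j0 + int n) \<le> s j0 - real n * c \<and> s (j0 + int n) - s (j0 + int n + 1) \<ge> c" for n
  proof (induction n)
    case 0 then show ?case by (simp add: c_def)
  next
    case (Suc n)
    define j where "j = j0 + int n"
    have e1: "j0 + int (Suc n) = j + 1" by (simp add: j_def)
    have a: "s (j+1) \<le> s j0 - real (Suc n) * c" using Suc j_def by (simp add: algebra_simps)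
    have "s (j+1+1) - 2 * s (j+1) + s (j+1-1) \<le> 0" using cv by blast
    then have b: "s (j+1) - s (j+1+1) \<ge> c" using Suc j_def by simp
    show ?case unfolding e1 using a b by blast
  qed
  obtain n where n: "s j0 < real n * c" using reals_Archimedean3[OF cpos] by blast
  then show False using P[of n] nn[rule_format, of "j0 + int n"] by simp
qed

lemma lemC:
  fixes r :: "int \<Rightarrow> real" and f :: "real \<Rightarrow> real" and k M :: real
  assumes kpos: "k > 0"
    and eq: "\<forall>j. k * (r (j+1) - 2 * r j + r (j-1)) + f (r j) = 0"
    and nn: "\<forall>j. r j \<ge> 0" and bd: "\<forall>j. r j \<le> M"
    and fneg: "\<forall>u. u \<notin> {0..1} \<longrightarrow> f u < 0"
    and fpos: "\<forall>u\<in>{0<..<1}. 0 < f u"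
    and f0: "f 0 = 0" and f1: "f 1 = 0"
  shows "\<forall>j. r j = r 0 \<and> (r 0 = 0 \<or> r 0 = 1)"
proof -
  have cv1: "\<forall>j. r j > 1 \<longrightarrow> r (j+1) - 2 * r j + r (j-1) > 0"
  proof (intro allI impI)
    fix j assume "r j > 1"
    then have "f (r j) < 0" using fneg by auto
    then have "k * (r (j+1) - 2 * r j + r (j-1)) > 0" using eq[rule_format, of j] by linarith
    then show "r (j+1) - 2 * r j + r (j-1) > 0" using kpos zero_less_mult_pos by blast
  qed
  have A1: "\<forall>j. r j > 1 \<longrightarrow> r (j+1) \<le> r j" by (rule lemA[OF bd cv1])
  have cv2: "\<forall>j. r (-j) > 1 \<longrightarrow> r (-(j+1)) - 2 * r (-j) + r (-(j-1)) > 0"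
  proof (intro allI impI)
    fix j assume h: "r (-j) > 1"
    have e1: "-(j+1) = (-j) - 1" and e2: "-(j-1) = (-j) + 1" by simp_all
    show "r (-(j+1)) - 2 * r (-j) + r (-(j-1)) > 0" unfolding e1 e2 using cv1[rule_format, of "-j"] h by linarith
  qed
  have bd2: "\<forall>j. r (-j) \<le> M" using bd by blast
  have A2: "\<forall>j. r (-j) > 1 \<longrightarrow> r (-(j+1)) \<le> r (-j)"
    using lemA[of "\<lambda>j. r (-j)" M] bd2 cv2 by blast
  have le1: "r j \<le> 1" for j
  proof (rule ccontr)
    assume "\<not> r j \<le> 1"
    then have h: "r j > 1" by simp
    have "r (j+1) \<le> r j" using A1 h by blast
    moreover have "r (-(-j+1)) \<le> r (-(-j))" using A2[rule_format, of "-j"] h by simp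
    then have "r (j-1) \<le> r j" by simp
    ultimately show False using cv1[rule_format, of j] h by linarith
  qed
  have fnn: "f (r j) \<ge> 0" for j
  proof -
    have "r j = 0 \<or> r j = 1 \<or> r j \<in> {0<..<1}" using nn le1[of j] by (auto simp: less_le)
    then show ?thesis using f0 f1 fpos by (auto intro: less_imp_le)
  qed
  have cc1: "\<forall>j. r (j+1) - 2 * r j + r (j-1) \<le> 0"
  proof
    fix j :: int
    have "k * (r (j+1) - 2 * r j + r (j-1)) \<le> 0" using eq[rule_format, of j] fnn[of j] by linarith
    then show "r (j+1) - 2 * r j + r (j-1) \<le> 0" using kpos by (simp add: mult_le_0_iff)
  qed
  have B1: "\<forall>j. r (j+1) \<ge> r j" by (rule lemB[OF nn cc1])
  have cc2: "\<forall>j. r (-(j+1)) - 2 * r (-j) + r (-(j-1)) \<le> 0"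
  proof
    fix j :: int
    have e1: "-(j+1) = (-j) - 1" and e2: "-(j-1) = (-j) + 1" by simp_all
    show "r (-(j+1)) - 2 * r (-j) + r (-(j-1)) \<le> 0" unfolding e1 e2 using cc1[rule_format, of "-j"] by linarith
  qed
  have nn2: "\<forall>j. r (-j) \<ge> 0" using nn by blast
  have B2: "\<forall>j. r (-(j+1)) \<ge> r (-j)" using lemB[of "\<lambda>j. r (-j)"] nn2 cc2 by blast
  have step: "r (j+1) = r j" for j
  proof -
    have "r (-(-(j+1)+1)) \<ge> r (-(-(j+1)))" using B2[rule_format, of "-(j+1)"] .
    then have "r j \<ge> r (j+1)" by (simp add: add.commute)
    then show ?thesis using B1 by (simp add: order_antisym)
  qed
  have const: "r j = r 0" for j
  proof (induction j rule: int_induct[of _ 0])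
    case base then show ?case by simp
  next
    case (step1 i) then show ?case using step[of i] by simp
  next
    case (step2 i) then show ?case using step[of "i-1"] by simp
  qed
  have "f (r 0) = 0" using eq[rule_format, of 0] const[of 1] const[of "-1"] by simp
  then have "r 0 = 0 \<or> r 0 = 1"
  proof -
    assume h: "f (r 0) = 0"
    have "r 0 \<notin> {0<..<1}" using fpos h by (metis less_irrefl)
    then show ?thesis using nn[rule_format, of 0] le1[of 0] by auto
  qed
  then show ?thesis using const by blast
qed

theorem theorem3p1:
  fixes \<alpha> \<beta> d :: real and f :: "real \<Rightarrow> real"
    and v :: "int \<Rightarrow> real \<Rightarrow> real" and \<rho> :: "int \<Rightarrow> real"
  assumes "\<alpha> > 0" "\<beta> > 0" "d > 0"
    and "admissible_f f"
    and "stationary_solution \<alpha> \<beta> d f v \<rho>"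
    and "nonneg_bounded v \<rho>"
  shows "(\<forall>j. \<rho> j = 0 \<and> (\<forall>x\<in>{0..1}. v j x = 0)) \<or>
         (\<forall>j. \<rho> j = 1 \<and> (\<forall>x\<in>{0..1}. v j x = \<beta> / \<alpha>))"
proof -
  note ap = assms(1) and bp = assms(2) and dp = assms(3)
  have A1: "\<exists>f'. C1_on_unit f f' \<and> f 0 = 0 \<and> f 1 = 0 \<and>
        (\<forall>u\<in>{0<..<1}. 0 < f u \<and> f u \<le> f' 0 * u)"
    and fneg: "\<forall>u. u \<notin> {0..1} \<longrightarrow> f u < 0"
    using assms(4) unfolding admissible_f_def by (blast, blast)
  then obtain f' where f': "C1_on_unit f f' \<and> f 0 = 0 \<and> f 1 = 0 \<and>
        (\<forall>u\<in>{0<..<1}. 0 < f u \<and> f u \<le> f' 0 * u)" by (elim exE)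
  have f0: "f 0 = 0" and f1: "f 1 = 0" using f' by simp_all
  have fpos: "\<forall>u\<in>{0<..<1}. 0 < f u" using f' by simp
  obtain v1 v2 where H0: "\<forall>j::int.
        (\<forall>x\<in>{0..1}. (v j has_real_derivative v1 j x) (at x within {0..1})) \<and>
        (\<forall>x\<in>{0..1}. (v1 j has_real_derivative v2 j x) (at x within {0..1})) \<and>
        continuous_on {0..1} (v2 j) \<and>
        (\<forall>x\<in>{0<..<1}. d * v2 j x = 0) \<and>
        0 = f (\<rho> j) + \<alpha> * (v j 0 + v (j - 1) 1) - 2 * \<beta> * \<rho> j \<and>
        - d * v1 j 0 + \<alpha> * v j 0 = \<beta> * \<rho> j \<and>
        d * v1 j 1 + \<alpha> * v j 1 = \<beta> * \<rho> (j + 1)"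
    using assms(5) unfolding stationary_solution_def by (elim exE) (rule that)
  have Hd1: "\<forall>x\<in>{0..1}. (v j has_real_derivative v1 j x) (at x within {0..1})" for j
    using H0 by blast
  have Hd2: "\<forall>x\<in>{0..1}. (v1 j has_real_derivative v2 j x) (at x within {0..1})" for j
    using H0 by blast
  have Hz: "\<forall>x\<in>{0<..<1}. d * v2 j x = 0" for j using H0 by blast
  have H3: "0 = f (\<rho> j) + \<alpha> * (v j 0 + v (j - 1) 1) - 2 * \<beta> * \<rho> j" for j
    using H0 by blast
  have H1: "- d * v1 j 0 + \<alpha> * v j 0 = \<beta> * \<rho> j" for j using H0 by blast
  have H2: "d * v1 j 1 + \<alpha> * v j 1 = \<beta> * \<rho> (j + 1)" for j using H0 by blast
  have nn: "\<forall>j. \<rho> j \<ge> 0" using assms(6) unfolding nonneg_bounded_def by simp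
  obtain M where bdM: "\<forall>j. \<bar>\<rho> j\<bar> \<le> M"
    using assms(6) unfolding nonneg_bounded_def by blast
  have aff: "\<forall>x\<in>{0..1}. v1 j x = v1 j 0 \<and> v j x = v j 0 + v1 j 0 * x" for j
  proof -
    have h: "\<forall>x\<in>{0<..<1}. v2 j x = 0" using Hz[of j] dp by simp
    show ?thesis using affine_sol[of "v j" "v1 j" "v2 j", OF Hd1[of j] Hd2[of j] h] .
  qed
  define a where "a j = v j 0" for j
  define b where "b j = v1 j 0" for j
  have aff1: "v1 j 1 = v1 j 0 \<and> v j 1 = v j 0 + v1 j 0 * 1" for j
    using aff[of j] by (meson atLeastAtMost_iff order_refl zero_le_one)
  have v1one: "v1 j 1 = b j" for j using aff1[of j] unfolding b_def by blast
  have vone: "v j 1 = a j + b j" for j using aff1[of j] unfolding a_def b_def by simp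
  have E1: "- d * b j + \<alpha> * a j = \<beta> * \<rho> j" for j using H1[of j] a_def b_def by simp
  have E2: "d * b j + \<alpha> * (a j + b j) = \<beta> * \<rho> (j+1)" for j
    using H2[of j] v1one vone by simp
  have E3: "0 = f (\<rho> j) + \<alpha> * (a j + (a (j-1) + b (j-1))) - 2 * \<beta> * \<rho> j" for j
    using H3[of j] vone[of "j-1"] a_def by simp
  have bj: "b j = \<beta> * (\<rho> (j+1) - \<rho> j) / (2*d + \<alpha>)" for j
  proof -
    have "(2*d + \<alpha>) * b j = \<beta> * (\<rho> (j+1) - \<rho> j)" using E1[of j] E2[of j] by algebra
    moreover have "2*d + \<alpha> > 0" using ap dp by simp
    ultimately show ?thesis by (simp add: field_simps)
  qed
  define k where "k = d * \<beta> / (2*d + \<alpha>)"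
  have kpos: "k > 0" unfolding k_def using ap bp dp by simp
  have key: "f (\<rho> j) + d * (b j - b (j-1)) = 0" for j
    using E1[of j] E2[of "j-1"] E3[of j] by (simp add: algebra_simps)
  have eq: "\<forall>j. k * (\<rho> (j+1) - 2 * \<rho> j + \<rho> (j-1)) + f (\<rho> j) = 0"
  proof
    fix j
    have m: "(2*d + \<alpha>) * b i = \<beta> * (\<rho> (i+1) - \<rho> i)" for i
      using E1[of i] E2[of i] by algebra
    have Dk: "(2*d + \<alpha>) * k = d * \<beta>" unfolding k_def using ap dp by simp
    have "(2*d + \<alpha>) * (d * (b j - b (j-1))) = d * ((2*d + \<alpha>) * b j - (2*d + \<alpha>) * b (j-1))"
      by (simp add: algebra_simps)
    also have "\<dots> = d * \<beta> * (\<rho> (j+1) - 2 * \<rho> j + \<rho> (j-1))"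
      unfolding m by (simp add: algebra_simps)
    also have "\<dots> = (2*d + \<alpha>) * (k * (\<rho> (j+1) - 2 * \<rho> j + \<rho> (j-1)))"
      unfolding Dk[symmetric] by (simp add: algebra_simps)
    finally have "d * (b j - b (j-1)) = k * (\<rho> (j+1) - 2 * \<rho> j + \<rho> (j-1))"
      using ap dp by simp
    then show "k * (\<rho> (j+1) - 2 * \<rho> j + \<rho> (j-1)) + f (\<rho> j) = 0" using key[of j] by simp
  qed
  have bdM': "\<forall>j. \<rho> j \<le> M" using bdM by (meson abs_le_D1)
  have C: "\<forall>j. \<rho> j = \<rho> 0 \<and> (\<rho> 0 = 0 \<or> \<rho> 0 = 1)"
    by (rule lemC[OF kpos eq nn bdM' fneg fpos f0 f1])
  have b0: "b j = 0" for j proof -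
    have "\<rho> (j+1) = \<rho> j" using C by (metis)
    then show ?thesis using bj[of j] by simp
  qed
  have vj: "\<forall>x\<in>{0..1}. v j x = \<beta> * \<rho> 0 / \<alpha>" for j
  proof -
    have "\<alpha> * a j = \<beta> * \<rho> 0" using E1[of j] b0[of j] C by simp
    then have "a j = \<beta> * \<rho> 0 / \<alpha>" using ap by (simp add: field_simps)
    moreover have "\<forall>x\<in>{0..1}. v j x = a j + b j * x" using aff[of j] unfolding a_def b_def by blast
    ultimately show ?thesis using b0[of j] by simp
  qed
  from C have "\<rho> 0 = 0 \<or> \<rho> 0 = 1" by blast
  then show ?thesis
  proof
    assume "\<rho> 0 = 0" then show ?thesis using C vj by simp
  next
    assume "\<rho> 0 = 1" then show ?thesis using C vj by simp
  qed
qed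

end
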